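(* Let $\alpha>-1$ and $n\in\mathbb{N}=\{1,2,\dots\}$, and let $t_1<\dots<t_n$ be the zeros of $L_n^{(\alpha)}$. Then $$\|\ell_n^{(\alpha)}\|_1=\int_0^\infty|\ell_n^{(\alpha)}(t)|\,dt=2\sum_{m=1}^n(-1)^{m+1}\ell_{n-1}^{(\alpha)}(t_m),$$ and $$\int_0^\infty t^{n-1}|\ell_n^{(\alpha)}(t)|\,dt=\frac{2}{\alpha+n}\sum_{m=1}^n(-1)^{m+1}t_m^{n}\,\ell_{n-1}^{(\alpha)}(t_m).$$
   Context: The generalized Laguerre polynomials are $L_n^{(\alpha)}(t)=\sum_{k=0}^n(-1)^k\binom{n+\alpha}{n-k}\frac{t^k}{k!}$, and the Laguerre functions are $\ell_n^{(\alpha)}(t)=\frac{n!}{\Gamma(n+\alpha+1)}t^{\alpha}e^{-t}L_n^{(\alpha)}(t)$ for $t>0$. *)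

theory Defs
  imports "HOL-Analysis.Analysis"
begin

definition laguerre :: "nat \<Rightarrow> real \<Rightarrow> real \<Rightarrow> real" where
  "laguerre n \<alpha> t = (\<Sum>k=0..n. (-1)^k * ((real n + \<alpha>) gchoose (n - k)) * t ^ k / fact k)"

definition laguerre_fun :: "nat \<Rightarrow> real \<Rightarrow> real \<Rightarrow> real" where
  "laguerre_fun n \<alpha> t = fact n / Gamma (real n + \<alpha> + 1) * t powr \<alpha> * exp (- t) * laguerre n \<alpha> t"

end

theory Submission
  imports Defs "HOL-Computational_Algebra.Polynomial" "HOL-Real_Asymp.Real_Asymp"
begin


definition lc :: "nat \<Rightarrow> real \<Rightarrow> nat \<Rightarrow> real" where
  "lc n \<beta> k = (if k \<le> n then (-1)^k * ((real n + \<beta>) gchoose (n - k)) / fact k else 0)"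

definition LP :: "nat \<Rightarrow> real \<Rightarrow> real poly" where
  "LP n \<beta> = (\<Sum>k\<le>n. monom (lc n \<beta> k) k)"

lemma coeff_LP: "coeff (LP n \<beta>) j = lc n \<beta> j"
  by (auto simp: LP_def coeff_sum coeff_monom lc_def)

lemma poly_LP: "poly (LP n \<beta>) x = laguerre n \<beta> x"
  by (auto simp: LP_def poly_sum poly_monom lc_def laguerre_def atLeast0AtMost intro!: sum.cong)

lemma gb_step: "(a - real k) * (a gchoose k) = real (Suc k) * (a gchoose Suc k)"
  using gbinomial_mult_1[of a k] by (simp add: algebra_simps)

lemma lc_Suc: "i < m \<Longrightarrow> lc m \<beta> (Suc i) = - ((-1)^i * ((real m + \<beta>) gchoose (m - Suc i)) / ((real i + 1) * fact i))"
  by (simp add: lc_def algebra_simps)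

lemma lc_le: "i \<le> m \<Longrightarrow> lc m \<beta> i = (-1)^i * ((real m + \<beta>) gchoose (m - i)) / fact i"
  by (simp add: lc_def)

lemma fact_nz: "(fact m::real) + fact m * real m \<noteq> 0"
proof -
  have "(fact m::real) + fact m * real m = fact m * (1 + real m)" by (simp add: algebra_simps)
  moreover have "(fact m::real) * (1 + real m) > 0" by (intro mult_pos_pos) auto
  ultimately show ?thesis by simp
qed

lemma arith_uv:
  fixes r F :: real
  assumes "r \<ge> 0" "F > 0"
  obtains u v where "(r+1) * u = 1" "\<And>x. x / ((r+1)*F) = x * u * v" "\<And>x. x / F = x * v"
proof -
  define u where "u = inverse (r+1)"
  define v where "v = inverse F"
  have ru: "(r+1) * u = 1" using assms by (simp add: u_def)
  have e: "x / ((r+1)*F) = x * u * v" "x / F = x * v" for x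
    by (simp_all add: u_def v_def divide_inverse inverse_mult_distrib mult.assoc)
  show ?thesis using that ru e by blast
qed

lemma arith1:
  fixes b0 b1 \<alpha> F s r k M :: real
  assumes F: "F > 0" and r: "r \<ge> 0"
    and g: "(\<alpha> + r + 2) * b0 = (k+1) * b1" and mK: "M = k + r + 1"
  shows "(\<alpha>+1)*(-(s * b0/((r+1)*F))) - s*b1/F + (r+1) * (-(s * b0/((r+1)*F)))
        = (M+1) * (-(s * b1/((r+1)*F)))"
proof -
  obtain u v where ru: "(r+1) * u = 1" and e: "\<And>x. x / ((r+1)*F) = x * u * v" "\<And>x. x / F = x * v"
    using arith_uv[OF r F] by blast
  show ?thesis unfolding e using g mK ru by algebra
qed

lemma arith2:
  fixes b1 c0 N F s r k M :: real
  assumes F: "F > 0" and r: "r \<ge> 0"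
    and g: "(k+1) * b1 = N * c0" and mK: "M = k + r + 1"
  shows "s*b1/F = N*(-(s*c0/((r+1)*F))) - (M+1)*(-(s*b1/((r+1)*F)))"
proof -
  obtain u v where ru: "(r+1) * u = 1" and e: "\<And>x. x / ((r+1)*F) = x * u * v" "\<And>x. x / F = x * v"
    using arith_uv[OF r F] by blast
  show ?thesis unfolding e using g mK ru by algebra
qed

lemma arith3:
  fixes b1 c0 c1 N F s r k M :: real
  assumes F: "F > 0" and r: "r \<ge> 0"
    and p: "b1 = c0 + c1" and g: "(k+1) * b1 = N * c0" and mK: "M = k + r + 1"
  shows "N*(-(s*c0/((r+1)*F))) - s*c1/F + (r+1)*(-(s*c0/((r+1)*F))) = (M+1)*(-(s*b1/((r+1)*F)))"
proof -
  obtain u v where ru: "(r+1) * u = 1" and e: "\<And>x. x / ((r+1)*F) = x * u * v" "\<And>x. x / F = x * v"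
    using arith_uv[OF r F] by blast
  show ?thesis unfolding e using p g mK ru by algebra
qed

lemma I1:
  "smult (\<alpha>+1) (LP m (\<alpha>+1)) - pCons 0 (LP m (\<alpha>+1)) + pCons 0 (pderiv (LP m (\<alpha>+1)))
     = smult (real (Suc m)) (LP (Suc m) \<alpha>)"
proof (rule poly_eqI)
  fix j
  define N where "N = real m + \<alpha> + 1"
  have e1: "real m + (\<alpha>+1) = N" "real (Suc m) + \<alpha> = N" "1 + real m + \<alpha> = N" by (simp_all add: N_def)
  show "coeff (smult (\<alpha>+1) (LP m (\<alpha>+1)) - pCons 0 (LP m (\<alpha>+1)) + pCons 0 (pderiv (LP m (\<alpha>+1)))) j
     = coeff (smult (real (Suc m)) (LP (Suc m) \<alpha>)) j"
  proof (cases j)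
    case 0
    have "(N - real m) * (N gchoose m) = real (Suc m) * (N gchoose Suc m)" by (rule gb_step)
    moreover have "N - real m = \<alpha> + 1" by (simp add: N_def)
    ultimately show ?thesis using 0 by (simp add: coeff_LP lc_def e1 coeff_pCons)
  next
    case (Suc i)
    consider "i < m" | "i = m" | "i > m" by linarith
    then show ?thesis
    proof cases
      case 1
      define K where "K = m - Suc i"
      have K: "m - i = Suc K" "Suc m - Suc i = Suc K" "m - Suc i = K" using 1 by (auto simp: K_def)
      have g: "(N - real K) * (N gchoose K) = real (Suc K) * (N gchoose Suc K)" by (rule gb_step)
      have NK: "N - real K = \<alpha> + real i + 2" using 1 by (simp add: N_def K_def of_nat_diff)
      have mK: "real m = real K + real i + 1" using 1 by (simp add: K_def of_nat_diff)
      have lhs: "coeff (smult (\<alpha>+1) (LP m (\<alpha>+1)) - pCons 0 (LP m (\<alpha>+1)) + pCons 0 (pderiv (LP m (\<alpha>+1)))) j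
        = (\<alpha>+1)*(-((-1)^i * (N gchoose K)/((real i+1)*fact i))) - (-1)^i*(N gchoose Suc K)/fact i
          + (real i+1) * (-((-1)^i * (N gchoose K)/((real i+1)*fact i)))"
        using 1 Suc by (simp add: coeff_LP lc_Suc lc_le e1 coeff_pCons coeff_pderiv K)
      have rhs: "coeff (smult (real (Suc m)) (LP (Suc m) \<alpha>)) j = (real m + 1) * (-((-1)^i * (N gchoose Suc K)/((real i+1)*fact i)))"
        using 1 Suc by (simp add: coeff_LP lc_Suc e1 K)
      show ?thesis unfolding lhs rhs
        by (rule arith1[where k="real K"]) (use g NK mK in auto)
    next
      case 2
      then show ?thesis using Suc fact_nz[of m] by (simp add: coeff_LP lc_def e1 coeff_pCons coeff_pderiv field_simps)
    next
      case 3
      then show ?thesis using Suc by (simp add: coeff_LP lc_def e1 coeff_pCons coeff_pderiv)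
    qed
  qed
qed


lemma I2:
  "pCons 0 (LP m (\<alpha>+1)) = smult (real m + \<alpha> + 1) (LP m \<alpha>) - smult (real (Suc m)) (LP (Suc m) \<alpha>)"
proof (rule poly_eqI)
  fix j
  define N where "N = real m + \<alpha> + 1"
  have e1: "real m + (\<alpha>+1) = N" "real (Suc m) + \<alpha> = N" "1 + real m + \<alpha> = N" "real m + \<alpha> = N - 1" "real m + \<alpha> + 1 = N"
    by (simp_all add: N_def)
  show "coeff (pCons 0 (LP m (\<alpha>+1))) j = coeff (smult (real m + \<alpha> + 1) (LP m \<alpha>) - smult (real (Suc m)) (LP (Suc m) \<alpha>)) j"
  proof (cases j)
    case 0
    have "real (Suc m) * (N gchoose Suc m) = N * ((N - 1) gchoose m)" by (rule gbinomial_absorption)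
    then show ?thesis using 0 by (simp add: coeff_LP lc_def e1 coeff_pCons)
  next
    case (Suc i)
    consider "i < m" | "i = m" | "i > m" by linarith
    then show ?thesis
    proof cases
      case 1
      define K where "K = m - Suc i"
      have K: "m - i = Suc K" "Suc m - Suc i = Suc K" "m - Suc i = K" using 1 by (auto simp: K_def)
      have g: "real (Suc K) * (N gchoose Suc K) = N * ((N - 1) gchoose K)" by (rule gbinomial_absorption)
      have mK: "real m = real K + real i + 1" using 1 by (simp add: K_def of_nat_diff)
      have lhs: "coeff (pCons 0 (LP m (\<alpha>+1))) j = (-1)^i*(N gchoose Suc K)/fact i"
        using 1 Suc by (simp add: coeff_LP lc_le e1 coeff_pCons K)
      have rhs: "coeff (smult (real m + \<alpha> + 1) (LP m \<alpha>) - smult (real (Suc m)) (LP (Suc m) \<alpha>)) j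
         = N*(-((-1)^i*((N - 1) gchoose K)/((real i+1)*fact i))) - (real m+1)*(-((-1)^i*(N gchoose Suc K)/((real i+1)*fact i)))"
        using 1 Suc by (simp add: coeff_LP lc_Suc e1 K)
      show ?thesis unfolding lhs rhs
        by (rule arith2[where k="real K"]) (use g mK in \<open>auto simp: add.commute\<close>)
    next
      case 2
      then show ?thesis using Suc fact_nz[of m] by (simp add: coeff_LP lc_def e1 coeff_pCons field_simps)
    next
      case 3
      then show ?thesis using Suc by (simp add: coeff_LP lc_def e1 coeff_pCons)
    qed
  qed
qed

lemma I3:
  "smult (real m + \<alpha> + 1) (LP m \<alpha>) - pCons 0 (LP m \<alpha>) + pCons 0 (pderiv (LP m \<alpha>))
     = smult (real (Suc m)) (LP (Suc m) \<alpha>)"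
proof (rule poly_eqI)
  fix j
  define N where "N = real m + \<alpha> + 1"
  have e1: "real m + (\<alpha>+1) = N" "real (Suc m) + \<alpha> = N" "1 + real m + \<alpha> = N" "real m + \<alpha> = N - 1" "real m + \<alpha> + 1 = N"
    by (simp_all add: N_def)
  show "coeff (smult (real m + \<alpha> + 1) (LP m \<alpha>) - pCons 0 (LP m \<alpha>) + pCons 0 (pderiv (LP m \<alpha>))) j
     = coeff (smult (real (Suc m)) (LP (Suc m) \<alpha>)) j"
  proof (cases j)
    case 0
    have "real (Suc m) * (N gchoose Suc m) = N * ((N - 1) gchoose m)" by (rule gbinomial_absorption)
    then show ?thesis using 0 by (simp add: coeff_LP lc_def e1 coeff_pCons)
  next
    case (Suc i)
    consider "i < m" | "i = m" | "i > m" by linarith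
    then show ?thesis
    proof cases
      case 1
      define K where "K = m - Suc i"
      have K: "m - i = Suc K" "Suc m - Suc i = Suc K" "m - Suc i = K" using 1 by (auto simp: K_def)
      have g: "real (Suc K) * (N gchoose Suc K) = N * ((N - 1) gchoose K)" by (rule gbinomial_absorption)
      have p: "N gchoose Suc K = ((N - 1) gchoose K) + ((N - 1) gchoose Suc K)"
        using gbinomial_Suc_Suc[of "N - 1" K] by simp
      have mK: "real m = real K + real i + 1" using 1 by (simp add: K_def of_nat_diff)
      have lhs: "coeff (smult (real m + \<alpha> + 1) (LP m \<alpha>) - pCons 0 (LP m \<alpha>) + pCons 0 (pderiv (LP m \<alpha>))) j
        = N*(-((-1)^i*((N - 1) gchoose K)/((real i+1)*fact i))) - (-1)^i*((N - 1) gchoose Suc K)/fact i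
          + (real i+1)*(-((-1)^i*((N - 1) gchoose K)/((real i+1)*fact i)))"
        using 1 Suc by (simp add: coeff_LP lc_Suc lc_le e1 coeff_pCons coeff_pderiv K)
      have rhs: "coeff (smult (real (Suc m)) (LP (Suc m) \<alpha>)) j = (real m + 1) * (-((-1)^i * (N gchoose Suc K)/((real i+1)*fact i)))"
        using 1 Suc by (simp add: coeff_LP lc_Suc e1 K)
      show ?thesis unfolding lhs rhs
        by (rule arith3[where k="real K"]) (use g p mK in \<open>auto simp: add.commute\<close>)
    next
      case 2
      then show ?thesis using Suc fact_nz[of m] by (simp add: coeff_LP lc_def e1 coeff_pCons coeff_pderiv field_simps)
    next
      case 3
      then show ?thesis using Suc by (simp add: coeff_LP lc_def e1 coeff_pCons coeff_pderiv)
    qed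
  qed
qed



definition H :: "real \<Rightarrow> real poly \<Rightarrow> real \<Rightarrow> real" where
  "H \<gamma> R x = x powr (\<gamma> + 1) * exp (- x) * poly R x"

lemma H_deriv:
  assumes "x > 0"
  shows "(H \<gamma> R has_real_derivative
           x powr \<gamma> * exp (- x) * poly (smult (\<gamma>+1) R - pCons 0 R + pCons 0 (pderiv R)) x) (at x)"
proof -
  have p: "((\<lambda>z. z powr (\<gamma> + 1)) has_real_derivative (\<gamma>+1) * x powr (\<gamma> + 1 - 1)) (at x)"
    by (rule has_real_derivative_powr[OF assms])
  have e: "((\<lambda>x. exp (- x)) has_real_derivative - exp (- x)) (at x)"
    by (auto intro!: derivative_eq_intros)
  have q: "(poly R has_real_derivative poly (pderiv R) x) (at x)" by (rule poly_DERIV)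
  have d: "((\<lambda>x. x powr (\<gamma> + 1) * exp (- x) * poly R x) has_real_derivative
      ((\<gamma>+1) * x powr (\<gamma> + 1 - 1) * exp (- x) + x powr (\<gamma> + 1) * (- exp (- x))) * poly R x
      + x powr (\<gamma> + 1) * exp (- x) * poly (pderiv R) x) (at x)"
    by (rule DERIV_cong[OF DERIV_mult[OF DERIV_mult[OF p e] q]]) (simp add: algebra_simps)
  have p1: "x powr (\<gamma> + 1) = x powr \<gamma> * x" "x powr (1 + \<gamma>) = x powr \<gamma> * x" using assms by (simp_all add: powr_add)
  show ?thesis unfolding H_def
    by (rule DERIV_cong[OF d]) (simp add: p1 algebra_simps)
qed

lemma H_lim0:
  assumes "\<gamma> + 1 > 0"
  shows "(H \<gamma> R \<longlongrightarrow> 0) (at_right 0)"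
proof -
  have a: "((\<lambda>x::real. x powr (\<gamma> + 1) * exp (- x)) \<longlongrightarrow> 0) (at_right 0)"
    using assms by real_asymp
  have b: "(poly R \<longlongrightarrow> poly R 0) (at_right 0)"
  proof -
    have "isCont (poly R) 0" by (rule poly_isCont)
    then show ?thesis by (simp add: isCont_def filterlim_at_split)
  qed
  show ?thesis unfolding H_def using tendsto_mult[OF a b] by simp
qed

lemma H_limtop: "(H \<gamma> R \<longlongrightarrow> 0) at_top"
proof -
  have e: "H \<gamma> R = (\<lambda>x. \<Sum>i\<le>degree R. coeff R i * (x powr (\<gamma> + 1) * exp (- x) * x ^ i))"
    by (auto simp: H_def poly_altdef sum_distrib_left algebra_simps)
  have "((\<lambda>x::real. x powr (\<gamma> + 1) * exp (- x) * x ^ i) \<longlongrightarrow> 0) at_top" for i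
    by real_asymp
  then show ?thesis unfolding e
    by (intro tendsto_null_sum tendsto_mult_right_zero)
qed

lemma gch_pos:
  assumes "\<alpha> > -1" "k \<le> n"
  shows "(real n + \<alpha>) gchoose (n - k) > 0"
proof -
  have "real n + \<alpha> - real (n - k) + 1 = real k + \<alpha> + 1" using assms by (simp add: of_nat_diff)
  then show ?thesis using assms
    by (simp add: gbinomial_pochhammer' pochhammer_pos)
qed

lemma lag_pos:
  assumes "\<alpha> > -1" "x \<le> 0"
  shows "laguerre n \<alpha> x > 0"
  unfolding laguerre_def
proof (rule sum_pos2[of _ 0])
  show "0 < (-1)^0 * ((real n + \<alpha>) gchoose (n - 0)) * x^0 / fact 0"
    using gch_pos[OF assms(1), of 0 n] by simp
  show "0 \<le> (-1)^k * ((real n + \<alpha>) gchoose (n - k)) * x^k / fact k" if "k \<in> {0..n}" for k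
  proof -
    have "(-1)^k * ((real n + \<alpha>) gchoose (n - k)) * x^k = ((real n + \<alpha>) gchoose (n - k)) * (-x)^k"
      by (simp add: power_minus')
    moreover have "0 \<le> ((real n + \<alpha>) gchoose (n - k)) * (-x)^k"
      using gch_pos[OF assms(1), of k n] that assms by (intro mult_nonneg_nonneg) auto
    ultimately show ?thesis by (metis divide_nonneg_pos fact_gt_zero)
  qed
qed auto

lemma degree_LP: "degree (LP n \<beta>) = n" and lead_LP: "lead_coeff (LP n \<beta>) = (-1)^n / fact n"
proof -
  have c: "coeff (LP n \<beta>) n = (-1)^n / fact n" by (simp add: coeff_LP lc_def)
  have "degree (LP n \<beta>) \<le> n" by (rule degree_le) (auto simp: coeff_LP lc_def)
  moreover have "n \<le> degree (LP n \<beta>)" by (rule le_degree) (simp add: c)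
  ultimately show d: "degree (LP n \<beta>) = n" by simp
  show "lead_coeff (LP n \<beta>) = (-1)^n / fact n" using c d by simp
qed

lemma prod_roots_dvd:
  fixes p :: "real poly"
  assumes "finite S" "\<forall>r\<in>S. poly p r = 0"
  shows "(\<Prod>r\<in>S. [:-r, 1:]) dvd p"
  using assms
proof (induction S rule: finite_induct)
  case empty then show ?case by simp
next
  case (insert a S)
  then obtain q where q: "p = (\<Prod>r\<in>S. [:-r, 1:]) * q" by (auto elim: dvdE)
  have "poly (\<Prod>r\<in>S. [:-r, 1:]) a \<noteq> 0"
    using insert by (auto simp: poly_prod)
  moreover have "poly p a = 0" using insert by auto
  ultimately have "poly q a = 0" using q by simp
  then obtain q' where q': "q = [:-a, 1:] * q'" by (auto simp: poly_eq_0_iff_dvd elim: dvdE)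
  have pr: "(\<Prod>r\<in>insert a S. [:-r, 1:]) = [:-a, 1:] * (\<Prod>r\<in>S. [:-r, 1:])" using insert by simp
  have "p = ([:-a, 1:] * (\<Prod>r\<in>S. [:-r, 1:])) * q'" by (simp only: q q' mult_ac)
  then show ?case unfolding pr by (metis dvd_triv_left)
qed

lemma LP_factor:
  fixes t :: "nat \<Rightarrow> real"
  assumes sm: "strict_mono_on {1..n} t" and z: "{x. laguerre n \<alpha> x = 0} = t ` {1..n}"
  shows "LP n \<alpha> = smult ((-1)^n / fact n) (\<Prod>i\<in>{1..n}. [:- t i, 1:])"
proof -
  define S where "S = t ` {1..n}"
  have inj: "inj_on t {1..n}" using sm by (rule strict_mono_on_imp_inj_on)
  have cS: "card S = n" using inj by (simp add: S_def card_image)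
  have fS: "finite S" by (simp add: S_def)
  have "\<forall>r\<in>S. poly (LP n \<alpha>) r = 0"
  proof
    fix r assume "r \<in> S"
    then have "r \<in> {x. laguerre n \<alpha> x = 0}" using z by (simp add: S_def)
    then show "poly (LP n \<alpha>) r = 0" by (simp add: poly_LP)
  qed
  then have "(\<Prod>r\<in>S. [:-r, 1:]) dvd LP n \<alpha>"
    using prod_roots_dvd[OF fS] by blast
  then obtain q where q: "LP n \<alpha> = (\<Prod>r\<in>S. [:-r, 1:]) * q" by (auto elim: dvdE)
  have dP: "degree (\<Prod>r\<in>S. [:-r, 1:]) = n"
    by (subst degree_prod_eq_sum_degree) (auto simp: cS)
  have LPnz: "LP n \<alpha> \<noteq> 0" using lead_LP[of n \<alpha>] by auto
  then have qnz: "q \<noteq> 0" using q by auto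
  have Pnz: "(\<Prod>r\<in>S. [:-r, 1:]) \<noteq> (0 :: real poly)" by (simp add: fS)
  have "degree (LP n \<alpha>) = n + degree q" using q qnz Pnz dP by (simp add: degree_mult_eq)
  then have "degree q = 0" by (simp add: degree_LP)
  then obtain a where a: "q = [:a:]" by (elim degree_eq_zeroE)
  have lP: "lead_coeff (\<Prod>r\<in>S. [:-r, 1:]) = (1::real)" by (simp add: lead_coeff_prod)
  have "lead_coeff (LP n \<alpha>) = a" using q a lP by (simp add: lead_coeff_mult)
  then have "a = (-1)^n / fact n" by (simp add: lead_LP)
  moreover have "(\<Prod>r\<in>S. [:-r, 1:]) = (\<Prod>i\<in>{1..n}. [:- t i, 1:])"
    unfolding S_def using inj by (simp add: prod.reindex)
  ultimately show ?thesis using q a by simp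
qed



lemma ftc_real:
  fixes F f :: "real \<Rightarrow> real"
  assumes "a \<le> b" "\<And>x. a \<le> x \<Longrightarrow> x \<le> b \<Longrightarrow> (F has_real_derivative f x) (at x)"
  shows "(f has_integral F b - F a) {a..b}"
  using assms
  by (intro fundamental_theorem_of_calculus)
     (auto simp: has_real_derivative_iff_has_vector_derivative[symmetric] intro: has_field_derivative_at_within)

lemma right_end:
  fixes F f :: "real \<Rightarrow> real"
  assumes der: "\<And>x. a \<le> x \<Longrightarrow> (F has_real_derivative f x) (at x)"
    and nn: "\<And>x. a \<le> x \<Longrightarrow> 0 \<le> f x"
    and lim: "(F \<longlongrightarrow> B) at_top"
  shows "(f has_integral (B - F a)) {a..}"
proof -
  define h where "h = (\<lambda>k x. if x \<in> {a..a + real k} then f x else 0)"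
  have hint: "(h k has_integral (F (a + real k) - F a)) {a..}" for k
    unfolding h_def by (subst has_integral_restrict) (auto intro!: ftc_real der)
  have lim2: "((\<lambda>k. F (a + real k) - F a) \<longlongrightarrow> B - F a) sequentially"
  proof -
    have "filterlim (\<lambda>k::nat. a + real k) at_top sequentially" by real_asymp
    then show ?thesis by (intro tendsto_diff tendsto_const filterlim_compose[OF lim])
  qed
  have eq: "(\<lambda>k. integral {a..} (h k)) = (\<lambda>k. F (a + real k) - F a)"
    using hint integral_unique by blast
  have mc: "f integrable_on {a..} \<and> ((\<lambda>k. integral {a..} (h k)) \<longlongrightarrow> integral {a..} f) sequentially"
  proof (rule monotone_convergence_increasing)
    show "h k integrable_on {a..}" for k using hint by blast
    show "h k x \<le> h (Suc k) x" if "x \<in> {a..}" for k x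
      using that nn by (auto simp: h_def)
    show "((\<lambda>k. h k x) \<longlongrightarrow> f x) sequentially" if "x \<in> {a..}" for x
    proof (rule tendsto_eventually)
      obtain N :: nat where "x - a \<le> real N" using real_arch_simple by blast
      then show "\<forall>\<^sub>F k in sequentially. h k x = f x"
        using that unfolding h_def eventually_sequentially
        by (intro exI[of _ N]) auto
    qed
    have bnd: "bounded (range (\<lambda>k. F (a + real k) - F a))"
      using lim2 by (metis Bseq_eq_bounded convergentI convergent_imp_Bseq)
    show "bounded (range (\<lambda>k. integral {a..} (h k)))" unfolding eq by (rule bnd)
  qed
  have "((\<lambda>k. F (a + real k) - F a) \<longlongrightarrow> integral {a..} f) sequentially" using mc unfolding eq by (rule conjunct2)
  then have "integral {a..} f = B - F a"
    using lim2 LIMSEQ_unique by blast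
  then show ?thesis using mc has_integral_integral by metis
qed

lemma left_end:
  fixes F f :: "real \<Rightarrow> real"
  assumes b: "0 < b"
    and der: "\<And>x. 0 < x \<Longrightarrow> x \<le> b \<Longrightarrow> (F has_real_derivative f x) (at x)"
    and nn: "\<And>x. 0 < x \<Longrightarrow> x \<le> b \<Longrightarrow> 0 \<le> f x"
    and lim: "(F \<longlongrightarrow> A) (at_right 0)"
  shows "(f has_integral (F b - A)) {0<..b}"
proof -
  define p where "p = (\<lambda>k::nat. b / (real k + 1))"
  have p0: "0 < p k" "p k \<le> b" for k using b by (auto simp: p_def field_simps)
  define h where "h = (\<lambda>k x. if x \<in> {p k..b} then f x else 0)"
  have hint: "(h k has_integral (F b - F (p k))) {0<..b}" for k
    unfolding h_def using p0[of k] by (subst has_integral_restrict) (auto intro!: ftc_real der)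
  have pl: "filterlim p (at_right 0) sequentially"
  proof -
    have "(p \<longlongrightarrow> 0) sequentially" unfolding p_def by real_asymp
    moreover have "\<forall>\<^sub>F k in sequentially. p k \<in> {0<..}" using p0 by (intro always_eventually) auto
    ultimately show ?thesis by (auto simp: filterlim_at elim: eventually_mono)
  qed
  have lim2: "((\<lambda>k. F b - F (p k)) \<longlongrightarrow> F b - A) sequentially"
    by (intro tendsto_diff tendsto_const filterlim_compose[OF lim pl])
  have eq: "(\<lambda>k. integral {0<..b} (h k)) = (\<lambda>k. F b - F (p k))"
    using hint integral_unique by blast
  have mc: "f integrable_on {0<..b} \<and> ((\<lambda>k. integral {0<..b} (h k)) \<longlongrightarrow> integral {0<..b} f) sequentially"
  proof (rule monotone_convergence_increasing)
    show "h k integrable_on {0<..b}" for k using hint by blast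
    show "h k x \<le> h (Suc k) x" if "x \<in> {0<..b}" for k x
    proof -
      have "p (Suc k) \<le> p k" using b by (auto simp: p_def field_simps)
      then show ?thesis using that nn by (auto simp: h_def)
    qed
    show "((\<lambda>k. h k x) \<longlongrightarrow> f x) sequentially" if "x \<in> {0<..b}" for x
    proof (rule tendsto_eventually)
      have "\<forall>\<^sub>F k in sequentially. p k < x"
        using pl that unfolding filterlim_at by (auto dest!: order_tendstoD(2)[of p 0 sequentially x])
      then show "\<forall>\<^sub>F k in sequentially. h k x = f x"
        by eventually_elim (use that in \<open>auto simp: h_def\<close>)
    qed
    have bnd: "bounded (range (\<lambda>k. F b - F (p k)))"
      using lim2 by (metis Bseq_eq_bounded convergentI convergent_imp_Bseq)
    show "bounded (range (\<lambda>k. integral {0<..b} (h k)))" unfolding eq by (rule bnd)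
  qed
  have "((\<lambda>k. F b - F (p k)) \<longlongrightarrow> integral {0<..b} f) sequentially" using mc unfolding eq by (rule conjunct2)
  then have "integral {0<..b} f = F b - A"
    using lim2 LIMSEQ_unique by blast
  then show ?thesis using mc has_integral_integral by metis
qed


lemma abs_int:
  fixes f F :: "real \<Rightarrow> real" and t :: "nat \<Rightarrow> real"
  assumes n: "n \<ge> 1" and t0: "0 < t 1"
    and mono: "\<And>i j. 1 \<le> i \<Longrightarrow> i \<le> j \<Longrightarrow> j \<le> n \<Longrightarrow> t i \<le> t j"
    and der: "\<And>x. 0 < x \<Longrightarrow> (F has_real_derivative f x) (at x)"
    and l0: "(F \<longlongrightarrow> 0) (at_right 0)" and ltop: "(F \<longlongrightarrow> 0) at_top"
    and sgn: "\<And>k x. k \<le> n \<Longrightarrow> 0 < x \<Longrightarrow> (1 \<le> k \<Longrightarrow> t k \<le> x) \<Longrightarrow>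
                 (k < n \<Longrightarrow> x \<le> t (Suc k)) \<Longrightarrow> 0 \<le> (-1)^k * f x"
  shows "((\<lambda>x. \<bar>f x\<bar>) has_integral (2 * (\<Sum>m=1..n. (-1)^(m+1) * F (t m)))) {0<..}"
proof -
  have tpos: "0 < t k" if "1 \<le> k" "k \<le> n" for k using mono[of 1 k] that t0 n by auto
  define V where "V k = 2 * (\<Sum>m=1..<k. (-1)^(m+1) * F (t m)) + (-1)^(k+1) * F (t k)" for k
  have piece: "((\<lambda>x. \<bar>f x\<bar>) has_integral V k) {0<..t k}" if "1 \<le> k" "k \<le> n" for k
    using that
  proof (induction k rule: dec_induct)
    case base
    have "(f has_integral (F (t 1) - 0)) {0<..t 1}"
    proof (rule left_end[OF t0 der _ l0])
      show "0 \<le> f x" if "0 < x" "x \<le> t 1" for x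
        using sgn[of 0 x] that n by auto
    qed auto
    moreover have "\<bar>f x\<bar> = f x" if "x \<in> {0<..t 1}" for x
      using sgn[of 0 x] that n by auto
    ultimately show ?case by (subst has_integral_cong) (auto simp: V_def)
  next
    case (step k)
    have tk: "0 < t k" "t k \<le> t (Suc k)" using tpos[of k] mono[of k "Suc k"] step by auto
    have "((\<lambda>x. (-1)^k * f x) has_integral ((-1)^k * F (t (Suc k)) - (-1)^k * F (t k))) {t k..t (Suc k)}"
      using tk by (intro ftc_real) (auto intro!: derivative_eq_intros der)
    moreover have "\<bar>f x\<bar> = (-1)^k * f x" if "x \<in> {t k..t (Suc k)}" for x
    proof -
      have "0 \<le> (-1)^k * f x" using sgn[of k x] that step tk by auto
      moreover have "\<bar>(-1)^k * f x\<bar> = \<bar>f x\<bar>" by (simp add: abs_mult)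
      ultimately show ?thesis by linarith
    qed
    ultimately have int2: "((\<lambda>x. \<bar>f x\<bar>) has_integral ((-1)^k * F (t (Suc k)) - (-1)^k * F (t k))) {t k..t (Suc k)}"
      by (subst has_integral_cong) auto
    have ng: "negligible ({0<..t k} \<inter> {t k..t (Suc k)})" by (rule negligible_subset[of "{t k}"]) auto
    have kn: "k \<le> n" using step by auto
    from has_integral_Un[OF step.IH[OF kn] int2 ng]
    have "((\<lambda>x. \<bar>f x\<bar>) has_integral (V k + ((-1)^k * F (t (Suc k)) - (-1)^k * F (t k)))) ({0<..t k} \<union> {t k..t (Suc k)})"
      by auto
    moreover have "{0<..t k} \<union> {t k..t (Suc k)} = {0<..t (Suc k)}" using tk by auto
    moreover have "V k + ((-1)^k * F (t (Suc k)) - (-1)^k * F (t k)) = V (Suc k)"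
      using step by (simp add: V_def)
    ultimately show ?case by simp
  qed
  have tn: "0 < t n" using tpos n by auto
  have "((\<lambda>x. (-1)^n * f x) has_integral (0 - (-1)^n * F (t n))) {t n..}"
    using tn by (intro right_end) (auto intro!: derivative_eq_intros der sgn tendsto_mult_right_zero ltop)
  moreover have "\<bar>f x\<bar> = (-1)^n * f x" if "x \<in> {t n..}" for x
  proof -
    have "0 \<le> (-1)^n * f x" using sgn[of n x] that tn n by auto
    moreover have "\<bar>(-1)^n * f x\<bar> = \<bar>f x\<bar>" by (simp add: abs_mult)
    ultimately show ?thesis by linarith
  qed
  ultimately have last: "((\<lambda>x. \<bar>f x\<bar>) has_integral (0 - (-1)^n * F (t n))) {t n..}"
    by (subst has_integral_cong) auto
  have ng: "negligible ({0<..t n} \<inter> {t n..})" by (rule negligible_subset[of "{t n}"]) auto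
  from has_integral_Un[OF piece[OF n order.refl] last ng]
  have "((\<lambda>x. \<bar>f x\<bar>) has_integral (V n + (0 - (-1)^n * F (t n)))) ({0<..t n} \<union> {t n..})"
    by auto
  moreover have "{0<..t n} \<union> {t n..} = {0<..}" using tn by auto
  moreover have "V n + (0 - (-1)^n * F (t n)) = 2 * (\<Sum>m=1..n. (-1)^(m+1) * F (t m))"
  proof -
    have "{1..n} = insert n {1..<n}" using n by auto
    then show ?thesis by (simp add: V_def)
  qed
  ultimately show ?thesis by simp
qed



theorem corollary2p4:
  fixes \<alpha> :: real and n :: nat and t :: "nat \<Rightarrow> real"
  assumes "\<alpha> > -1" and "n \<ge> 1"
    and "strict_mono_on {1..n} t"
    and "{x. laguerre n \<alpha> x = 0} = t ` {1..n}"
  shows "((\<lambda>x. \<bar>laguerre_fun n \<alpha> x\<bar>) has_integral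
            2 * (\<Sum>m=1..n. (-1)^(m+1) * laguerre_fun (n - 1) \<alpha> (t m))) {0<..} \<and>
         ((\<lambda>x. x ^ (n - 1) * \<bar>laguerre_fun n \<alpha> x\<bar>) has_integral
            2 / (\<alpha> + real n) * (\<Sum>m=1..n. (-1)^(m+1) * (t m) ^ n * laguerre_fun (n - 1) \<alpha> (t m))) {0<..}"
proof -
  have \<alpha>: "\<alpha> > -1" by fact
  obtain m where n: "n = Suc m" using assms(2) by (cases n) auto
  define N where "N = real m + \<alpha> + 1"
  have Npos: "N > 0" using \<alpha> by (simp add: N_def)
  have NN: "N = \<alpha> + real n" by (simp add: N_def n)
  define cn where "cn = fact n / Gamma (real n + \<alpha> + 1)"
  define cm where "cm = fact m / Gamma N"
  have GNpos: "Gamma N > 0" using Npos by (rule Gamma_real_pos)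
  have GN: "Gamma (real n + \<alpha> + 1) = N * Gamma N"
  proof -
    have "real n + \<alpha> + 1 = N + 1" by (simp add: N_def n)
    moreover have "N \<notin> \<int>\<^sub>\<le>\<^sub>0" using Npos nonpos_Ints_nonpos by fastforce
    ultimately show ?thesis by (simp add: Gamma_plus1)
  qed
  have cn_eq: "cn = real n * (fact m / (N * Gamma N))"
    unfolding cn_def GN by (simp add: n algebra_simps)
  have cnN: "cn / real n = cm / N"
    using cn_eq n by (simp add: cm_def divide_divide_eq_left mult.commute)
  have cnpos: "cn > 0" unfolding cn_def using GN GNpos Npos by simp
  have lf_m: "laguerre_fun (n - 1) \<alpha> x = cm * x powr \<alpha> * exp (-x) * laguerre m \<alpha> x" for x
    by (simp add: laguerre_fun_def cm_def n N_def)
  have nm: "n - 1 = m" "n - Suc 0 = m" by (simp_all add: n)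
  have lf_n: "laguerre_fun n \<alpha> x = cn * x powr \<alpha> * exp (-x) * laguerre n \<alpha> x" for x
    by (simp add: laguerre_fun_def cn_def)
  have sm: "strict_mono_on {1..n} t" by fact
  have tmono: "t i \<le> t j" if "1 \<le> i" "i \<le> j" "j \<le> n" for i j
  proof (cases "i = j")
    case False
    then have "i < j" using that by simp
    then show ?thesis using strict_mono_onD[OF sm, of i j] that by simp
  qed simp
  have root: "laguerre n \<alpha> (t i) = 0" if "1 \<le> i" "i \<le> n" for i
  proof -
    have "t i \<in> t ` {1..n}" using that by simp
    then show ?thesis using assms(4) by blast
  qed
  have t1: "0 < t 1"
  proof (rule ccontr)
    assume "\<not> 0 < t 1"
    then have "laguerre n \<alpha> (t 1) > 0" using lag_pos[OF \<alpha>] by simp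
    then show False using root[of 1] n by simp
  qed
  have fac: "laguerre n \<alpha> x = (-1)^n / fact n * (\<Prod>i\<in>{1..n}. (x - t i))" for x
  proof -
    have "laguerre n \<alpha> x = poly (LP n \<alpha>) x" by (simp add: poly_LP)
    also have "\<dots> = (-1)^n / fact n * (\<Prod>i\<in>{1..n}. (x - t i))"
      by (subst LP_factor[OF sm assms(4)]) (simp add: poly_prod)
    finally show ?thesis .
  qed
  have sgnL: "0 \<le> (-1)^k * laguerre n \<alpha> x"
    if k: "k \<le> n" "1 \<le> k \<Longrightarrow> t k \<le> x" "k < n \<Longrightarrow> x \<le> t (Suc k)" for k x
  proof -
    have sp: "{1..n} = {1..k} \<union> {k<..n}" using k by auto
    have P: "(\<Prod>i\<in>{1..n}. (x - t i)) = (\<Prod>i\<in>{1..k}. (x - t i)) * (\<Prod>i\<in>{k<..n}. (x - t i))"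
      unfolding sp by (rule prod.union_disjoint) auto
    have Q: "(\<Prod>i\<in>{k<..n}. (x - t i)) = (-1)^(n-k) * (\<Prod>i\<in>{k<..n}. (t i - x))"
    proof -
      have "(\<Prod>i\<in>{k<..n}. (x - t i)) = (\<Prod>i\<in>{k<..n}. (-1) * (t i - x))" by (intro prod.cong) auto
      also have "\<dots> = (-1)^(n-k) * (\<Prod>i\<in>{k<..n}. (t i - x))" unfolding prod.distrib by simp
      finally show ?thesis .
    qed
    have s: "(-1::real)^k * ((-1)^n * (-1)^(n-k)) = 1"
    proof -
      have h: "(-1::real)^k * (-1)^(n-k) = (-1)^n" using k by (simp add: power_add[symmetric])
      have "(-1::real)^k * ((-1)^n * (-1)^(n-k)) = (-1)^n * ((-1)^k * (-1)^(n-k))" by (rule mult.left_commute)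
      also have "\<dots> = (-1)^n * (-1)^n" unfolding h ..
      also have "\<dots> = 1" by (simp add: power_mult_distrib[symmetric])
      finally show ?thesis .
    qed
    have A: "0 \<le> (\<Prod>i\<in>{1..k}. (x - t i))"
      by (rule prod_nonneg) (use tmono k in \<open>force\<close>)
    have B: "0 \<le> (\<Prod>i\<in>{k<..n}. (t i - x))"
    proof (rule prod_nonneg)
      fix i assume i: "i \<in> {k<..n}"
      then have "x \<le> t (Suc k)" "t (Suc k) \<le> t i" using k tmono[of "Suc k" i] by auto
      then show "0 \<le> t i - x" by simp
    qed
    have "(-1)^k * laguerre n \<alpha> x = ((-1)^k * ((-1)^n * (-1)^(n-k))) / fact n *
          ((\<Prod>i\<in>{1..k}. (x - t i)) * (\<Prod>i\<in>{k<..n}. (t i - x)))"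
      unfolding fac P Q by (simp add: algebra_simps)
    also have "\<dots> \<ge> 0" unfolding s using A B by simp
    finally show ?thesis .
  qed
  have tpos: "0 < t i" if "1 \<le> i" "i \<le> n" for i using tmono[of 1 i] that t1 by simp
  define F1 where "F1 x = cn / real n * H \<alpha> (LP m (\<alpha>+1)) x" for x
  have int1: "((\<lambda>x. \<bar>laguerre_fun n \<alpha> x\<bar>) has_integral
      2 * (\<Sum>i=1..n. (-1)^(i+1) * F1 (t i))) {0<..}"
  proof (rule abs_int[where t=t and n=n and F=F1 and f="laguerre_fun n \<alpha>", OF assms(2) t1 tmono])
    show "(F1 has_real_derivative laguerre_fun n \<alpha> x) (at x)" if "0 < x" for x
      unfolding F1_def[abs_def]
      by (rule DERIV_cong[OF DERIV_cmult[OF H_deriv[OF that]]])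
         (use n in \<open>simp add: I1 poly_LP lf_n[unfolded n]\<close>)
    show "(F1 \<longlongrightarrow> 0) (at_right 0)" unfolding F1_def[abs_def]
      by (rule tendsto_mult_right_zero[OF H_lim0]) (use \<alpha> in simp)
    show "(F1 \<longlongrightarrow> 0) at_top" unfolding F1_def[abs_def]
      by (rule tendsto_mult_right_zero[OF H_limtop])
    show "0 \<le> (-1)^k * laguerre_fun n \<alpha> x"
      if "k \<le> n" "0 < x" "1 \<le> k \<Longrightarrow> t k \<le> x" "k < n \<Longrightarrow> x \<le> t (Suc k)" for k x
    proof -
      have "(-1)^k * laguerre_fun n \<alpha> x = (cn * x powr \<alpha> * exp (-x)) * ((-1)^k * laguerre n \<alpha> x)"
        by (simp add: lf_n algebra_simps)
      also have "\<dots> \<ge> 0" using sgnL[OF that(1,3,4)] cnpos by simp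
      finally show ?thesis .
    qed
  qed
  have F1t: "F1 (t i) = laguerre_fun (n - 1) \<alpha> (t i)" if "1 \<le> i" "i \<le> n" for i
  proof -
    let ?x = "t i"
    have x: "?x > 0" using tpos that by simp
    have "?x * poly (LP m (\<alpha>+1)) ?x = poly (pCons 0 (LP m (\<alpha>+1))) ?x" by simp
    also have "\<dots> = N * laguerre m \<alpha> ?x"
      using root[OF that] by (simp add: I2 poly_LP N_def n)
    finally have e: "?x * poly (LP m (\<alpha>+1)) ?x = N * laguerre m \<alpha> ?x" .
    have "F1 ?x = cn / real n * (?x powr \<alpha> * exp (- ?x) * (?x * poly (LP m (\<alpha>+1)) ?x))"
      using x by (simp add: F1_def H_def powr_add algebra_simps)
    also have "\<dots> = cm / N * N * (?x powr \<alpha> * exp (- ?x) * laguerre m \<alpha> ?x)"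
      unfolding e cnN by simp
    also have "\<dots> = laguerre_fun (n - 1) \<alpha> ?x" using Npos by (simp add: lf_m[unfolded nm(1)] nm)
    finally show ?thesis .
  qed
  define F2 where "F2 x = cn / real n * H (\<alpha> + real m) (LP m \<alpha>) x" for x
  have int2: "((\<lambda>x. \<bar>x ^ m * laguerre_fun n \<alpha> x\<bar>) has_integral
      2 * (\<Sum>i=1..n. (-1)^(i+1) * F2 (t i))) {0<..}"
  proof (rule abs_int[where t=t and n=n and F=F2 and f="\<lambda>x. x ^ m * laguerre_fun n \<alpha> x", OF assms(2) t1 tmono])
    show "(F2 has_real_derivative x ^ m * laguerre_fun n \<alpha> x) (at x)" if "0 < x" for x
    proof -
      have g: "\<alpha> + real m + 1 = real m + \<alpha> + 1" by simp
      have pw: "x powr (\<alpha> + real m) = x powr \<alpha> * x ^ m" using that by (simp add: powr_add powr_realpow)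
      have pe: "poly (smult (\<alpha> + real m + 1) (LP m \<alpha>) - pCons 0 (LP m \<alpha>) + pCons 0 (pderiv (LP m \<alpha>))) x
          = real n * laguerre n \<alpha> x" unfolding g I3 by (simp add: poly_LP n)
      have nz: "real n \<noteq> 0" using n by simp
      show ?thesis unfolding F2_def[abs_def]
        by (rule DERIV_cong[OF DERIV_cmult[OF H_deriv[OF that]]], unfold pe pw)
           (use nz in \<open>simp add: lf_n\<close>)
    qed
    show "(F2 \<longlongrightarrow> 0) (at_right 0)" unfolding F2_def[abs_def]
      by (rule tendsto_mult_right_zero[OF H_lim0]) (use \<alpha> in simp)
    show "(F2 \<longlongrightarrow> 0) at_top" unfolding F2_def[abs_def]
      by (rule tendsto_mult_right_zero[OF H_limtop])
    show "0 \<le> (-1)^k * (x ^ m * laguerre_fun n \<alpha> x)"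
      if "k \<le> n" "0 < x" "1 \<le> k \<Longrightarrow> t k \<le> x" "k < n \<Longrightarrow> x \<le> t (Suc k)" for k x
    proof -
      have "(-1)^k * (x ^ m * laguerre_fun n \<alpha> x) = (x ^ m * cn * x powr \<alpha> * exp (-x)) * ((-1)^k * laguerre n \<alpha> x)"
        by (simp add: lf_n algebra_simps)
      also have "\<dots> \<ge> 0" using sgnL[OF that(1,3,4)] cnpos that(2) by simp
      finally show ?thesis .
    qed
  qed
  have F2t: "F2 (t i) = (t i) ^ n * laguerre_fun (n - 1) \<alpha> (t i) / (\<alpha> + real n)" if "1 \<le> i" "i \<le> n" for i
  proof -
    let ?x = "t i"
    have x: "?x > 0" using tpos that by simp
    have pw: "?x powr (\<alpha> + real m + 1) = ?x powr \<alpha> * ?x ^ n" using x by (simp add: powr_add powr_realpow n)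
    have "F2 ?x = cn / real n * (?x ^ n * (?x powr \<alpha> * exp (- ?x) * laguerre m \<alpha> ?x))"
      unfolding F2_def H_def pw by (simp add: poly_LP algebra_simps)
    also have "\<dots> = cm / N * (?x ^ n * (?x powr \<alpha> * exp (- ?x) * laguerre m \<alpha> ?x))"
      unfolding cnN by simp
    also have "\<dots> = (t i) ^ n * laguerre_fun (n - 1) \<alpha> (t i) / (\<alpha> + real n)"
      by (simp add: lf_m[unfolded nm(1)] nm NN[symmetric] algebra_simps)
    finally show ?thesis .
  qed
  have r1: "2 * (\<Sum>i=1..n. (-1)^(i+1) * F1 (t i)) = 2 * (\<Sum>m=1..n. (-1)^(m+1) * laguerre_fun (n - 1) \<alpha> (t m))"
    using F1t by (intro arg_cong[where f="\<lambda>s. 2 * s"] sum.cong) auto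
  have r2: "2 * (\<Sum>i=1..n. (-1)^(i+1) * F2 (t i)) =
      2 / (\<alpha> + real n) * (\<Sum>m=1..n. (-1)^(m+1) * (t m) ^ n * laguerre_fun (n - 1) \<alpha> (t m))"
  proof -
    have "(\<Sum>i=1..n. (-1)^(i+1) * F2 (t i)) = (\<Sum>i=1..n. (-1)^(i+1) * (t i) ^ n * laguerre_fun (n - 1) \<alpha> (t i) / (\<alpha> + real n))"
      using F2t by (intro sum.cong) auto
    also have "\<dots> = (\<Sum>i=1..n. (-1)^(i+1) * (t i) ^ n * laguerre_fun (n - 1) \<alpha> (t i)) / (\<alpha> + real n)"
      by (simp add: sum_divide_distrib)
    finally show ?thesis by simp
  qed
  have int2': "((\<lambda>x. x ^ (n - 1) * \<bar>laguerre_fun n \<alpha> x\<bar>) has_integral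
      2 * (\<Sum>i=1..n. (-1)^(i+1) * F2 (t i))) {0<..}"
    using int2 by (subst has_integral_cong[where g="\<lambda>x. \<bar>x ^ m * laguerre_fun n \<alpha> x\<bar>"]) (auto simp: abs_mult n)
  show ?thesis using int1 int2' unfolding r1 r2 by blast
qed


end
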